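(* Consider a stochastic $K$-armed bandit whose rewards lie in $[-R_{\max},R_{\max}]$, with mean reward vector $\mathbf r$, and run LB-SGB (defined in the context) with barrier parameter $\eta>0$ and learning rate $\alpha\in\Big(0,\frac{1}{6(\sqrt2R_{\max}+\frac{2}{\eta}K)}\Big)$. Then for all $t\ge1$, $$\Big|\Phi_\eta(\boldsymbol\theta_{t+1})-\Phi_\eta(\boldsymbol\theta_t)-\langle\nabla\Phi_\eta(\boldsymbol\theta_t),\boldsymbol\theta_{t+1}-\boldsymbol\theta_t\rangle\Big|\le\Big(\frac{3\|\nabla\Phi_\eta(\boldsymbol\theta_t)\|_2}{2-6\alpha(\sqrt2R_{\max}+\frac2\eta K)}+\frac{15K}{\eta}\Big)\|\boldsymbol\theta_{t+1}-\boldsymbol\theta_t\|_2^2.$$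
   Context: Softmax policy $\pi_{\boldsymbol\theta}(a)=e^{\theta(a)}/\sum_be^{\theta(b)}$; $\Phi_\eta(\boldsymbol\theta)=\pi_{\boldsymbol\theta}^\top\mathbf r+\frac1\eta\sum_a\log\pi_{\boldsymbol\theta}(a)$. LB-SGB: start from $\boldsymbol\theta=\mathbf 0$; at round $t$ sample $a_t\sim\pi_{\boldsymbol\theta_t}$, observe $R_t(a_t)$, set $\hat r_t(a)=\mathbb I\{a_t=a\}R_t(a_t)/\pi_{\boldsymbol\theta_t}(a)$ and update $\boldsymbol\theta_{t+1}=\boldsymbol\theta_t+\alpha\big[(\mathrm{diag}(\pi_{\boldsymbol\theta_t})-\pi_{\boldsymbol\theta_t}\pi_{\boldsymbol\theta_t}^\top)\hat{\mathbf r}_t+\frac1\eta(\mathbf 1-K\pi_{\boldsymbol\theta_t})\big]$. *)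

theory Defs
  imports "HOL-Analysis.Analysis"
begin

text \<open>Arms are indexed by a finite type 'n, so K = CARD('n); parameter vectors are real^'n.\<close>

definition softmax :: "real^'n::finite \<Rightarrow> real^'n" where
  "softmax \<theta> = (\<chi> a. exp (\<theta> $ a) / (\<Sum>b\<in>UNIV. exp (\<theta> $ b)))"

definition Phi :: "real \<Rightarrow> real^'n::finite \<Rightarrow> real^'n \<Rightarrow> real" where
  "Phi \<eta> r \<theta> = softmax \<theta> \<bullet> r + (1/\<eta>) * (\<Sum>a\<in>UNIV. ln (softmax \<theta> $ a))"

definition rhat :: "real^'n::finite \<Rightarrow> 'n \<Rightarrow> real \<Rightarrow> real^'n" where
  "rhat \<theta> act Rt = (\<chi> a. (if act = a then Rt else 0) / softmax \<theta> $ a)"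

definition lbsgb_step :: "real \<Rightarrow> real \<Rightarrow> real^'n::finite \<Rightarrow> 'n \<Rightarrow> real \<Rightarrow> real^'n" where
  "lbsgb_step \<alpha> \<eta> \<theta> act Rt =
     (let p = softmax \<theta>; g = rhat \<theta> act Rt in
      \<theta> + \<alpha> *\<^sub>R ((\<chi> a. p $ a * g $ a - p $ a * (p \<bullet> g))
                  + (1/\<eta>) *\<^sub>R (\<chi> a. 1 - real CARD('n) * p $ a)))"

text \<open>Iterates: lbsgb .. 0 is the paper's theta_1 = 0, lbsgb .. n is theta_(n+1);
  acts n / rews n are the paper's a_(n+1) and R_(n+1)(a_(n+1)).\<close>
primrec lbsgb :: "real \<Rightarrow> real \<Rightarrow> (nat \<Rightarrow> 'n::finite) \<Rightarrow> (nat \<Rightarrow> real) \<Rightarrow> nat \<Rightarrow> real^'n" where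
  "lbsgb \<alpha> \<eta> acts rews 0 = 0"
| "lbsgb \<alpha> \<eta> acts rews (Suc n) = lbsgb_step \<alpha> \<eta> (lbsgb \<alpha> \<eta> acts rews n) (acts n) (rews n)"

end

theory Submission
  imports Defs
begin


definition ee :: "real^'n::finite \<Rightarrow> real^'n \<Rightarrow> 'n \<Rightarrow> real \<Rightarrow> real" where
  "ee th d a s = exp (th$a + s * d$a)"
definition ZZ :: "real^'n::finite \<Rightarrow> real^'n \<Rightarrow> real \<Rightarrow> real" where
  "ZZ th d s = (\<Sum>b\<in>UNIV. ee th d b s)"
definition pp :: "real^'n::finite \<Rightarrow> real^'n \<Rightarrow> 'n \<Rightarrow> real \<Rightarrow> real" where
  "pp th d a s = ee th d a s / ZZ th d s"
definition EE :: "real^'n::finite \<Rightarrow> real^'n \<Rightarrow> ('n \<Rightarrow> real) \<Rightarrow> real \<Rightarrow> real" where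
  "EE th d f s = (\<Sum>a\<in>UNIV. pp th d a s * f a)"

lemma ee_pos: "ee th d a s > 0" by (simp add: ee_def)
lemma ZZ_pos: "ZZ th d s > 0"
  unfolding ZZ_def by (rule sum_pos) (auto simp: ee_pos)
lemma pp_pos: "pp th d a s > 0" by (simp add: pp_def ee_pos ZZ_pos)
lemma pp_sum: "(\<Sum>a\<in>UNIV. pp th d a s) = 1"
  using ZZ_pos[of th d s] by (simp add: pp_def ZZ_def flip: sum_divide_distrib)
lemma pp_le1: "pp th d a s \<le> 1"
proof -
  have "pp th d a s \<le> (\<Sum>b\<in>UNIV. pp th d b s)"
    by (rule member_le_sum) (auto simp: less_imp_le pp_pos)
  then show ?thesis by (simp add: pp_sum)
qed

lemma softmax_pp: "softmax (th + s *\<^sub>R d) $ a = pp th d a s"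
  by (simp add: softmax_def pp_def ZZ_def ee_def)

lemma ee_deriv: "(ee th d a has_field_derivative d$a * ee th d a s) (at s within S)"
  unfolding ee_def[abs_def]
  by (auto intro!: derivative_eq_intros)

lemma ZZ_deriv: "(ZZ th d has_field_derivative (\<Sum>b\<in>UNIV. d$b * ee th d b s)) (at s within S)"
  unfolding ZZ_def[abs_def]
  by (rule DERIV_sum) (rule ee_deriv)

lemma ZZ_deriv_E: "(\<Sum>b\<in>UNIV. d$b * ee th d b s) = ZZ th d s * EE th d (\<lambda>b. d$b) s"
  using ZZ_pos[of th d s]
  by (simp add: EE_def pp_def sum_distrib_left mult.commute)

lemma pp_deriv: "(pp th d a has_field_derivative pp th d a s * (d$a - EE th d (\<lambda>b. d$b) s)) (at s within S)"
proof -
  have "((\<lambda>s. ee th d a s / ZZ th d s) has_field_derivative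
     (d$a * ee th d a s * ZZ th d s - ee th d a s * (\<Sum>b\<in>UNIV. d$b * ee th d b s)) / (ZZ th d s * ZZ th d s)) (at s within S)"
    by (rule DERIV_divide[OF ee_deriv ZZ_deriv]) (simp add: ZZ_pos[THEN less_imp_neq, symmetric])
  moreover have "(d$a * ee th d a s * ZZ th d s - ee th d a s * (\<Sum>b\<in>UNIV. d$b * ee th d b s)) / (ZZ th d s * ZZ th d s)
      = pp th d a s * (d$a - EE th d (\<lambda>b. d$b) s)"
    using ZZ_pos[of th d s] unfolding ZZ_deriv_E by (simp add: pp_def field_simps)
  ultimately show ?thesis unfolding pp_def[abs_def] by simp
qed

lemma EE_deriv: "(EE th d f has_field_derivative
   EE th d (\<lambda>a. f a * d$a) s - EE th d f s * EE th d (\<lambda>b. d$b) s) (at s within S)"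
proof -
  have "((\<lambda>s. \<Sum>a\<in>UNIV. pp th d a s * f a) has_field_derivative
      (\<Sum>a\<in>UNIV. pp th d a s * (d$a - EE th d (\<lambda>b. d$b) s) * f a)) (at s within S)"
    by (rule DERIV_sum) (rule DERIV_cmult_right[OF pp_deriv])
  moreover have "(\<Sum>a\<in>UNIV. pp th d a s * (d$a - c) * f a)
     = EE th d (\<lambda>a. f a * d$a) s - EE th d f s * c" for c
    by (simp add: EE_def algebra_simps sum_subtractf sum_distrib_right sum_distrib_left)
  ultimately show ?thesis unfolding EE_def[abs_def] by simp
qed

lemma EE_deriv_intro[derivative_intros]:
  "D = EE th d (\<lambda>a. f a * d$a) s - EE th d f s * EE th d (\<lambda>b. d$b) s \<Longrightarrow>
   ((\<lambda>s. EE th d f s) has_field_derivative D) (at s within S)"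
  using EE_deriv[of th d f s S] by simp

lemma ZZ_deriv_intro[derivative_intros]:
  "D = ZZ th d s * EE th d (\<lambda>b. d$b) s \<Longrightarrow>
   ((\<lambda>s. ZZ th d s) has_field_derivative D) (at s within S)"
  using ZZ_deriv[of th d s S] ZZ_deriv_E[of d th s] by simp

lemma phi_eq: fixes th :: "real^'n::finite" shows
  "Phi \<eta> r (th + s *\<^sub>R d) = EE th d (\<lambda>a. r$a) s + (1/\<eta>) * (\<Sum>a\<in>UNIV. th$a + s*d$a)
      - (1/\<eta>) * real CARD('n) * ln (ZZ th d s)"
proof -
  have 1: "softmax (th + s *\<^sub>R d) \<bullet> r = EE th d (\<lambda>a. r$a) s"
    by (simp add: inner_vec_def softmax_pp EE_def)
  have 2: "ln (softmax (th + s *\<^sub>R d) $ a) = th$a + s*d$a - ln (ZZ th d s)" for a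
    using ZZ_pos[of th d s] unfolding softmax_pp pp_def ee_def by (simp add: ln_div)
  show ?thesis unfolding Phi_def 1 2
    by (simp add: sum_subtractf algebra_simps)
qed

definition D1 :: "real \<Rightarrow> real^'n::finite \<Rightarrow> real^'n \<Rightarrow> real^'n \<Rightarrow> real \<Rightarrow> real" where
  "D1 \<eta> r th d s = EE th d (\<lambda>a. r$a * d$a) s - EE th d (\<lambda>a. r$a) s * EE th d (\<lambda>b. d$b) s
     + (1/\<eta>) * (\<Sum>a\<in>UNIV. d$a) - (1/\<eta>) * real CARD('n) * EE th d (\<lambda>b. d$b) s"

definition D2 :: "real \<Rightarrow> real^'n::finite \<Rightarrow> real^'n \<Rightarrow> real^'n \<Rightarrow> real \<Rightarrow> real" where
  "D2 \<eta> r th d s = (EE th d (\<lambda>a. r$a * d$a * d$a) s - EE th d (\<lambda>a. r$a * d$a) s * EE th d (\<lambda>b. d$b) s)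
     - ((EE th d (\<lambda>a. r$a * d$a) s - EE th d (\<lambda>a. r$a) s * EE th d (\<lambda>b. d$b) s) * EE th d (\<lambda>b. d$b) s
        + EE th d (\<lambda>a. r$a) s * (EE th d (\<lambda>b. d$b * d$b) s - EE th d (\<lambda>b. d$b) s * EE th d (\<lambda>b. d$b) s))
     - (1/\<eta>) * real CARD('n) * (EE th d (\<lambda>b. d$b * d$b) s - EE th d (\<lambda>b. d$b) s * EE th d (\<lambda>b. d$b) s)"

lemma phi_deriv: fixes th :: "real^'n::finite" shows "((\<lambda>s. Phi \<eta> r (th + s *\<^sub>R d)) has_field_derivative D1 \<eta> r th d s) (at s within S)"
proof -
  have "((\<lambda>s. EE th d (\<lambda>a. r$a) s + (1/\<eta>) * (\<Sum>a\<in>UNIV. th$a + s*d$a)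
      - (1/\<eta>) * real CARD('n) * ln (ZZ th d s)) has_field_derivative D1 \<eta> r th d s) (at s within S)"
    unfolding D1_def
    by (rule derivative_eq_intros refl | simp add: ZZ_pos)+
       (use ZZ_pos[of th d s] in \<open>simp add: field_simps\<close>)
  then show ?thesis by (simp add: phi_eq)
qed

lemma D1_deriv: "(D1 \<eta> r th d has_field_derivative D2 \<eta> r th d s) (at s within S)"
  unfolding D1_def[abs_def] D2_def
  by (rule derivative_eq_intros refl | simp)+



definition VV :: "real^'n::finite \<Rightarrow> real^'n \<Rightarrow> real^'n \<Rightarrow> real \<Rightarrow> real^'n" where
  "VV r th d s = (\<chi> a. pp th d a s * (r$a - EE th d (\<lambda>b. r$b) s))"

lemma VV_sum: "(\<Sum>a\<in>UNIV. VV r th d s $ a * x a) = EE th d (\<lambda>a. r$a * x a) s - EE th d (\<lambda>b. r$b) s * EE th d x s"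
proof -
  have "(\<Sum>a\<in>UNIV. pp th d a s * (r$a - c) * x a) = EE th d (\<lambda>a. r$a * x a) s - c * EE th d x s" for c
    by (simp add: EE_def algebra_simps sum_subtractf sum_distrib_left)
  then show ?thesis by (simp add: VV_def)
qed

lemma norm_sq_sum: "norm (x::real^'n::finite) ^ 2 = (\<Sum>a\<in>UNIV. (x$a)^2)"
  by (simp only: power2_norm_eq_inner) (simp add: inner_vec_def power2_eq_square)

lemma EE_abs_le: assumes "\<And>a. \<bar>x a\<bar> \<le> B" shows "\<bar>EE th d x s\<bar> \<le> B"
proof -
  have "\<bar>EE th d x s\<bar> \<le> (\<Sum>a\<in>UNIV. \<bar>pp th d a s * x a\<bar>)"
    unfolding EE_def by (rule sum_abs)
  also have "\<dots> \<le> (\<Sum>a\<in>UNIV. pp th d a s * B)"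
    by (rule sum_mono) (use assms pp_pos[of th d] in \<open>auto simp: abs_mult abs_of_pos intro: mult_left_mono\<close>)
  also have "\<dots> = B" by (simp add: pp_sum flip: sum_distrib_right)
  finally show ?thesis .
qed

lemma sum_abs_sq_le: fixes V d :: "real^'n::finite"
  shows "\<bar>\<Sum>a\<in>UNIV. V$a * (d$a)^2\<bar> \<le> norm V * norm d ^ 2"
proof -
  have "\<bar>\<Sum>a\<in>UNIV. V$a * (d$a)^2\<bar> \<le> (\<Sum>a\<in>UNIV. \<bar>V$a * (d$a)^2\<bar>)" by (rule sum_abs)
  also have "\<dots> \<le> (\<Sum>a\<in>UNIV. norm V * (d$a)^2)"
    by (rule sum_mono) (auto simp: abs_mult intro: mult_right_mono component_le_norm_cart)
  also have "\<dots> = norm V * norm d ^ 2" by (simp add: norm_sq_sum sum_distrib_left)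
  finally show ?thesis .
qed

lemma D2_eq: fixes th :: "real^'n::finite" shows
  "D2 \<eta> r th d s = (\<Sum>a\<in>UNIV. VV r th d s $ a * (d$a)^2)
     - 2 * EE th d (\<lambda>b. d$b) s * (\<Sum>a\<in>UNIV. VV r th d s $ a * d$a)
     - (1/\<eta>) * real CARD('n) * (EE th d (\<lambda>b. d$b * d$b) s - EE th d (\<lambda>b. d$b) s * EE th d (\<lambda>b. d$b) s)"
proof -
  have e: "(\<lambda>a. r$a * (d$a)^2) = (\<lambda>a. r$a * d$a * d$a)" "(\<lambda>a. (d$a)^2) = (\<lambda>b. d$b * d$b)"
    by (auto simp: power2_eq_square)
  show ?thesis
    unfolding VV_sum e unfolding D2_def by (simp add: algebra_simps)
qed

lemma D2_bound: fixes th :: "real^'n::finite" assumes "\<eta> > 0" shows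
  "\<bar>D2 \<eta> r th d s\<bar> \<le> 3 * norm (VV r th d s) * norm d ^ 2 + real CARD('n) / \<eta> * norm d ^ 2"
proof -
  let ?V = "VV r th d s" and ?Ed = "EE th d (\<lambda>b. d$b) s" and ?Edd = "EE th d (\<lambda>b. d$b * d$b) s"
  have Ed: "\<bar>?Ed\<bar> \<le> norm d" by (rule EE_abs_le) (rule component_le_norm_cart)
  have Edd: "\<bar>?Edd\<bar> \<le> norm d ^ 2"
  proof (rule EE_abs_le)
    fix a have "\<bar>d$a\<bar> \<le> \<bar>norm d\<bar>" using component_le_norm_cart[of d a] by simp
    then have "(d$a)^2 \<le> (norm d)^2" by (simp only: abs_le_square_iff)
    then show "\<bar>d$a * d$a\<bar> \<le> norm d ^ 2" by (simp add: power2_eq_square)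
  qed
  have Edd0: "?Edd \<ge> 0" unfolding EE_def by (auto intro!: sum_nonneg simp: pp_pos less_imp_le)
  have Ed2: "?Ed * ?Ed \<le> norm d ^ 2" proof -
    have "\<bar>?Ed\<bar> \<le> \<bar>norm d\<bar>" using Ed by simp
    then have "?Ed^2 \<le> (norm d)^2" by (simp only: abs_le_square_iff)
    then show ?thesis by (simp add: power2_eq_square)
  qed
  have var: "\<bar>?Edd - ?Ed * ?Ed\<bar> \<le> norm d ^ 2" proof -
    have "0 \<le> ?Ed * ?Ed" by simp
    then show ?thesis using Edd Edd0 Ed2 unfolding abs_le_iff by linarith
  qed
  have cs: "\<bar>\<Sum>a\<in>UNIV. ?V $ a * d$a\<bar> \<le> norm ?V * norm d"
    using Cauchy_Schwarz_ineq2[of ?V d] by (simp add: inner_vec_def)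
  have t1: "\<bar>\<Sum>a\<in>UNIV. ?V$a * (d$a)^2\<bar> \<le> norm ?V * norm d ^ 2" by (rule sum_abs_sq_le)
  have t2: "\<bar>2 * ?Ed * (\<Sum>a\<in>UNIV. ?V $ a * d$a)\<bar> \<le> 2 * (norm ?V * norm d ^ 2)"
  proof -
    have "\<bar>2 * ?Ed * (\<Sum>a\<in>UNIV. ?V $ a * d$a)\<bar> = 2 * (\<bar>?Ed\<bar> * \<bar>\<Sum>a\<in>UNIV. ?V $ a * d$a\<bar>)"
      by (simp add: abs_mult)
    also have "\<dots> \<le> 2 * (norm d * (norm ?V * norm d))"
      using Ed cs by (intro mult_left_mono mult_mono) auto
    finally show ?thesis by (simp add: power2_eq_square algebra_simps)
  qed
  have t3: "\<bar>(1/\<eta>) * real CARD('n) * (?Edd - ?Ed * ?Ed)\<bar> \<le> real CARD('n) / \<eta> * norm d ^ 2"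
  proof -
    have "\<bar>(1/\<eta>) * real CARD('n) * (?Edd - ?Ed * ?Ed)\<bar> = real CARD('n) / \<eta> * \<bar>?Edd - ?Ed * ?Ed\<bar>"
      using assms by (simp add: abs_mult)
    also have "\<dots> \<le> real CARD('n) / \<eta> * norm d ^ 2"
      using var assms by (intro mult_left_mono) auto
    finally show ?thesis .
  qed
  show ?thesis unfolding D2_eq using t1 t2 t3 by linarith
qed



lemma pp_deriv_intro[derivative_intros]:
  "D = pp th d a s * (d$a - EE th d (\<lambda>b. d$b) s) \<Longrightarrow>
   ((\<lambda>s. pp th d a s) has_field_derivative D) (at s within S)"
  using pp_deriv[of th d a s S] by simp

definition NN :: "real^'n::finite \<Rightarrow> real^'n \<Rightarrow> real^'n \<Rightarrow> real \<Rightarrow> real" where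
  "NN r th d s = (\<Sum>a\<in>UNIV. VV r th d s $ a * VV r th d s $ a)"

lemma NN_norm: "NN r th d s = norm (VV r th d s) ^ 2"
  unfolding NN_def norm_sq_sum by (simp add: power2_eq_square)

lemma VVa_deriv: "((\<lambda>s. VV r th d s $ a) has_field_derivative
   (pp th d a s * (0 - (EE th d (\<lambda>b. r$b * d$b) s - EE th d (\<lambda>b. r$b) s * EE th d (\<lambda>b. d$b) s))
       + pp th d a s * (d$a - EE th d (\<lambda>b. d$b) s) * (r$a - EE th d (\<lambda>b. r$b) s))) (at s within S)"
proof -
  have "((\<lambda>s. pp th d a s * (r$a - EE th d (\<lambda>b. r$b) s)) has_field_derivative
     pp th d a s * (0 - (EE th d (\<lambda>b. r$b * d$b) s - EE th d (\<lambda>b. r$b) s * EE th d (\<lambda>b. d$b) s))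
       + pp th d a s * (d$a - EE th d (\<lambda>b. d$b) s) * (r$a - EE th d (\<lambda>b. r$b) s)) (at s within S)"
    by (rule DERIV_mult'[OF pp_deriv DERIV_diff[OF DERIV_const EE_deriv]])
  moreover have "(\<lambda>s. VV r th d s $ a) = (\<lambda>s. pp th d a s * (r$a - EE th d (\<lambda>b. r$b) s))"
    by (simp add: VV_def)
  ultimately show ?thesis by simp
qed


definition VVd :: "real^'n::finite \<Rightarrow> real^'n \<Rightarrow> real^'n \<Rightarrow> 'n \<Rightarrow> real \<Rightarrow> real" where
  "VVd r th d a s = pp th d a s * (0 - (EE th d (\<lambda>b. r$b * d$b) s - EE th d (\<lambda>b. r$b) s * EE th d (\<lambda>b. d$b) s))
       + pp th d a s * (d$a - EE th d (\<lambda>b. d$b) s) * (r$a - EE th d (\<lambda>b. r$b) s)"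

definition NNd :: "real^'n::finite \<Rightarrow> real^'n \<Rightarrow> real^'n \<Rightarrow> real \<Rightarrow> real" where
  "NNd r th d s = (\<Sum>a\<in>UNIV. VV r th d s $ a * VVd r th d a s + VVd r th d a s * VV r th d s $ a)"

lemma NN_deriv: "(NN r th d has_field_derivative NNd r th d s) (at s within S)"
  unfolding NN_def[abs_def] NNd_def
  by (rule DERIV_sum, rule DERIV_mult'[OF VVa_deriv[folded VVd_def] VVa_deriv[folded VVd_def]])

lemma NNd_bound: "NNd r th d s \<le> 6 * norm d * NN r th d s"
proof -
  let ?V = "VV r th d s" and ?Ed = "EE th d (\<lambda>b. d$b) s" and ?Er = "EE th d (\<lambda>b. r$b) s"
  define C where "C = EE th d (\<lambda>b. r$b * d$b) s - ?Er * ?Ed"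
  have C: "C = (\<Sum>a\<in>UNIV. ?V $ a * d$a)" unfolding C_def VV_sum by simp
  have eq: "NNd r th d s = 2 * (\<Sum>a\<in>UNIV. (?V$a)^2 * (d$a - ?Ed)) - 2 * C * (\<Sum>a\<in>UNIV. ?V$a * pp th d a s)"
  proof -
    have alg: "v * (p * (0 - c) + p * x * (ra - er)) + (p * (0 - c) + p * x * (ra - er)) * v
        = 2 * (v^2 * x) - 2 * c * (v * p)" if "v = p * (ra - er)" for v p ra er c x :: real
      unfolding that by (simp add: power2_eq_square algebra_simps)
    have "NNd r th d s = (\<Sum>a\<in>UNIV. 2 * ((?V$a)^2 * (d$a - ?Ed)) - 2 * C * (?V$a * pp th d a s))"
      unfolding NNd_def VVd_def C_def[symmetric]
      by (rule sum.cong[OF refl], rule alg) (simp add: VV_def)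
    then show ?thesis by (simp add: sum_subtractf sum_distrib_left)
  qed
  have Ed: "\<bar>?Ed\<bar> \<le> norm d" by (rule EE_abs_le) (rule component_le_norm_cart)
  have t1: "(\<Sum>a\<in>UNIV. (?V$a)^2 * (d$a - ?Ed)) \<le> (\<Sum>a\<in>UNIV. (?V$a)^2 * (2 * norm d))"
  proof (rule sum_mono)
    fix a
    have "d$a - ?Ed \<le> 2 * norm d" using Ed component_le_norm_cart[of d a] by linarith
    then show "(?V$a)^2 * (d$a - ?Ed) \<le> (?V$a)^2 * (2 * norm d)" by (intro mult_left_mono) auto
  qed
  have cs: "\<bar>C\<bar> \<le> norm ?V * norm d"
    using Cauchy_Schwarz_ineq2[of ?V d] by (simp add: inner_vec_def C)
  have sp: "\<bar>\<Sum>a\<in>UNIV. ?V$a * pp th d a s\<bar> \<le> norm ?V"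
  proof -
    have "\<bar>\<Sum>a\<in>UNIV. ?V$a * pp th d a s\<bar> \<le> (\<Sum>a\<in>UNIV. \<bar>?V$a * pp th d a s\<bar>)" by (rule sum_abs)
    also have "\<dots> \<le> (\<Sum>a\<in>UNIV. norm ?V * pp th d a s)"
      by (rule sum_mono) (auto simp: abs_mult abs_of_pos pp_pos intro!: mult_right_mono component_le_norm_cart)
    also have "\<dots> = norm ?V" by (simp add: pp_sum flip: sum_distrib_left)
    finally show ?thesis .
  qed
  have t2: "\<bar>2 * C * (\<Sum>a\<in>UNIV. ?V$a * pp th d a s)\<bar> \<le> 2 * (norm ?V * norm d * norm ?V)"
  proof -
    have "\<bar>C\<bar> * \<bar>\<Sum>a\<in>UNIV. ?V$a * pp th d a s\<bar> \<le> (norm ?V * norm d) * norm ?V"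
      by (rule mult_mono[OF cs sp]) auto
    then show ?thesis by (simp add: abs_mult)
  qed
  have n: "NN r th d s = (\<Sum>a\<in>UNIV. (?V$a)^2)" by (simp add: NN_def power2_eq_square)
  have "(\<Sum>a\<in>UNIV. (?V$a)^2 * (2 * norm d)) = 2 * norm d * NN r th d s"
    unfolding n sum_distrib_right[symmetric] by (rule mult.commute)
  moreover have "norm ?V * norm d * norm ?V = norm d * NN r th d s"
    by (simp add: NN_norm power2_eq_square)
  moreover have "- (2 * C * (\<Sum>a\<in>UNIV. ?V$a * pp th d a s)) \<le> 2 * (norm ?V * norm d * norm ?V)"
    using t2 by linarith
  ultimately show ?thesis unfolding eq using t1 by linarith
qed



lemma NN_gronwall: assumes "t \<ge> 0"
  shows "NN r th d t \<le> NN r th d 0 * exp (6 * norm d * t)"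
proof -
  define M where "M s = NN r th d s * exp (- (6 * norm d * s))" for s
  have "M t \<le> M 0"
  proof (rule DERIV_nonpos_imp_nonincreasing[OF assms])
    fix x
    have e: "((\<lambda>x. exp (- (6 * norm d * x))) has_field_derivative exp (- (6 * norm d * x)) * (- (6 * norm d))) (at x)"
      by (auto intro!: derivative_eq_intros)
    have "(M has_field_derivative NN r th d x * (exp (- (6 * norm d * x)) * (- (6 * norm d)))
        + NNd r th d x * exp (- (6 * norm d * x))) (at x)"
      unfolding M_def[abs_def] by (rule DERIV_mult'[OF NN_deriv e])
    moreover have "NN r th d x * (exp (- (6 * norm d * x)) * (- (6 * norm d)))
        + NNd r th d x * exp (- (6 * norm d * x)) \<le> 0"
    proof -
      have "NNd r th d x * exp (- (6 * norm d * x)) \<le> 6 * norm d * NN r th d x * exp (- (6 * norm d * x))"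
        using NNd_bound by (intro mult_right_mono) auto
      then show ?thesis by (simp add: algebra_simps)
    qed
    ultimately show "\<exists>y. (M has_field_derivative y) (at x) \<and> y \<le> 0" by blast
  qed
  then have "NN r th d t * exp (- (6 * norm d * t)) \<le> NN r th d 0" by (simp add: M_def)
  then have m: "NN r th d t * exp (- (6 * norm d * t)) * exp (6 * norm d * t) \<le> NN r th d 0 * exp (6 * norm d * t)"
    by (intro mult_right_mono) auto
  have o: "exp (- (6 * norm d * t)) * exp (6 * norm d * t) = 1" by (simp flip: exp_add)
  have "NN r th d t = NN r th d t * exp (- (6 * norm d * t)) * exp (6 * norm d * t)"
    by (simp add: mult.assoc flip: exp_add)
  with m show ?thesis by linarith
qed

lemma VV_growth: assumes "0 \<le> t" "t \<le> 1" "3 * norm d < 1"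
  shows "norm (VV r th d t) \<le> norm (VV r th d 0) / (1 - 3 * norm d)"
proof -
  have sq: "exp (3 * norm d * t) ^ 2 = exp (6 * norm d * t)"
    by (simp add: power2_eq_square flip: exp_add)
  have "norm (VV r th d t) ^ 2 \<le> (norm (VV r th d 0) * exp (3 * norm d * t)) ^ 2"
    using NN_gronwall[OF assms(1), of r th d] unfolding power_mult_distrib sq NN_norm .
  then have a: "norm (VV r th d t) \<le> norm (VV r th d 0) * exp (3 * norm d * t)"
    by (rule power2_le_imp_le) simp
  have "exp (3 * norm d * t) \<le> exp (3 * norm d)"
    using assms by (simp add: mult_left_le)
  also have "exp (3 * norm d) \<le> 1 / (1 - 3 * norm d)"
  proof -
    have "1 - 3 * norm d \<le> exp (- (3 * norm d))" using exp_ge_add_one_self[of "- (3 * norm d)"] by simp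
    then have "(1 - 3 * norm d) * exp (3 * norm d) \<le> exp (- (3 * norm d)) * exp (3 * norm d)"
      by (rule mult_right_mono) simp
    then have "(1 - 3 * norm d) * exp (3 * norm d) \<le> 1"
      by (simp flip: exp_add)
    then show ?thesis using assms by (simp add: field_simps)
  qed
  finally have "norm (VV r th d 0) * exp (3 * norm d * t) \<le> norm (VV r th d 0) * (1 / (1 - 3 * norm d))"
    by (intro mult_left_mono) auto
  then show ?thesis using a by simp
qed



lemma pp0: "pp th d a 0 = softmax th $ a"
  using softmax_pp[of th 0 d a] by simp

lemma VV0: "VV r th d 0 = VV r th 0 0"
  by (simp add: VV_def EE_def pp0)

lemma sm_pos: "softmax th $ a > 0" using pp_pos[of th 0 a 0] pp0 by metis
lemma sm_sum: "(\<Sum>a\<in>UNIV. softmax th $ a) = 1" using pp_sum[of th 0 0] by (simp add: pp0)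
lemma sm_le1: "softmax th $ a \<le> 1" using pp_le1[of th 0 a 0] by (simp add: pp0)

lemma sm_sq_sum: "(\<Sum>a\<in>UNIV. (softmax th $ a)^2) \<le> 1"
proof -
  have "(\<Sum>a\<in>UNIV. (softmax th $ a)^2) \<le> (\<Sum>a\<in>UNIV. softmax th $ a)"
    by (rule sum_mono) (simp add: power2_eq_square mult_left_le sm_le1 less_imp_le[OF sm_pos])
  then show ?thesis by (simp add: sm_sum)
qed

definition u2 :: "real^'n::finite \<Rightarrow> real^'n" where
  "u2 th = (\<chi> a. 1 - real CARD('n) * softmax th $ a)"

lemma u2_norm: "norm (u2 (th::real^'n::finite)) \<le> real CARD('n)"
proof (rule power2_le_imp_le)
  let ?K = "real CARD('n)"
  have "norm (u2 th) ^ 2 = (\<Sum>a\<in>UNIV. 1 - 2 * ?K * softmax th $ a + ?K^2 * (softmax th $ a)^2)"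
    unfolding norm_sq_sum u2_def
    by (intro sum.cong refl) (simp add: power2_eq_square algebra_simps)
  also have "\<dots> = (\<Sum>a\<in>(UNIV::'n set). 1) - 2 * ?K * (\<Sum>a\<in>UNIV. softmax th $ a) + ?K^2 * (\<Sum>a\<in>UNIV. (softmax th $ a)^2)"
    by (simp only: sum.distrib sum_subtractf sum_distrib_left)
  also have "\<dots> = ?K - 2 * ?K + ?K^2 * (\<Sum>a\<in>UNIV. (softmax th $ a)^2)"
    by (simp only: sm_sum) simp
  also have "\<dots> \<le> ?K - 2 * ?K + ?K^2 * 1"
    by (intro add_left_mono mult_left_mono sm_sq_sum) simp
  also have "\<dots> \<le> ?K^2" by simp
  finally show "norm (u2 th) ^ 2 \<le> ?K^2" .
qed simp

lemma D1_at0: fixes th :: "real^'n::finite" shows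
  "D1 \<eta> r th u 0 = (VV r th 0 0 + (1/\<eta>) *\<^sub>R u2 th) \<bullet> u"
proof -
  have "D1 \<eta> r th u 0 = (\<Sum>a\<in>UNIV. VV r th u 0 $ a * u$a) + (1/\<eta>) * (\<Sum>a\<in>UNIV. u$a)
      - (1/\<eta>) * real CARD('n) * (\<Sum>a\<in>UNIV. softmax th $ a * u$a)"
    unfolding D1_def VV_sum by (simp add: EE_def pp0)
  also have "\<dots> = (VV r th 0 0 + (1/\<eta>) *\<^sub>R u2 th) \<bullet> u"
  proof -
    have "(VV r th 0 0 + (1/\<eta>) *\<^sub>R u2 th) \<bullet> u = (\<Sum>a\<in>UNIV. VV r th 0 0 $ a * u$a + ((1/\<eta>) * u$a
        - (1/\<eta>) * real CARD('n) * (softmax th $ a * u$a)))"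
      unfolding inner_vec_def by (intro sum.cong refl) (simp add: u2_def algebra_simps)
    also have "\<dots> = (\<Sum>a\<in>UNIV. VV r th 0 0 $ a * u$a) + ((1/\<eta>) * (\<Sum>a\<in>UNIV. u$a)
      - (1/\<eta>) * real CARD('n) * (\<Sum>a\<in>UNIV. softmax th $ a * u$a))"
      by (simp only: sum.distrib sum_subtractf sum_distrib_left)
    finally show ?thesis by (simp add: VV0[of r th u])
  qed
  finally show ?thesis .
qed

lemma grad_eq: fixes th :: "real^'n::finite"
  assumes grad: "(Phi \<eta> r has_derivative (\<lambda>h. g \<bullet> h)) (at th)"
  shows "g = VV r th 0 0 + (1/\<eta>) *\<^sub>R u2 th" and "D1 \<eta> r th u 0 = g \<bullet> u"
proof -
  have dir: "D1 \<eta> r th u 0 = g \<bullet> u" for u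
  proof -
    have l: "((\<lambda>s. th + s *\<^sub>R u) has_derivative (\<lambda>h. h *\<^sub>R u)) (at 0)"
      by (auto intro!: derivative_eq_intros)
    have "((\<lambda>s. Phi \<eta> r (th + s *\<^sub>R u)) has_derivative (\<lambda>h. g \<bullet> (h *\<^sub>R u))) (at 0)"
      using has_derivative_compose[OF l, of "Phi \<eta> r" "\<lambda>h. g \<bullet> h"] grad by simp
    moreover have "(\<lambda>h. h * (g \<bullet> u)) = (*) (g \<bullet> u)" by (auto simp: fun_eq_iff)
    ultimately have "((\<lambda>s. Phi \<eta> r (th + s *\<^sub>R u)) has_field_derivative g \<bullet> u) (at 0)"
      by (simp add: has_field_derivative_def)
    moreover have "((\<lambda>s. Phi \<eta> r (th + s *\<^sub>R u)) has_field_derivative D1 \<eta> r th u 0) (at 0)"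
      by (rule phi_deriv)
    ultimately show ?thesis using DERIV_unique by blast
  qed
  then show "D1 \<eta> r th u 0 = g \<bullet> u" .
  let ?w = "VV r th 0 0 + (1/\<eta>) *\<^sub>R u2 th"
  have "g \<bullet> (g - ?w) = ?w \<bullet> (g - ?w)" using dir[of "g - ?w"] D1_at0[of \<eta> r th "g - ?w"] by simp
  then have "(g - ?w) \<bullet> (g - ?w) = 0" by (simp add: inner_diff_left)
  then show "g = ?w" by simp
qed



lemma step_eq: fixes th :: "real^'n::finite" shows
  "lbsgb_step \<alpha> \<eta> th act R - th =
    \<alpha> *\<^sub>R ((\<chi> a. (if act = a then R else 0) - softmax th $ a * R) + (1/\<eta>) *\<^sub>R u2 th)"
proof -
  have pg: "softmax th $ a * rhat th act R $ a = (if act = a then R else 0)" for a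
    using sm_pos[of th a] by (simp add: rhat_def)
  have ip: "softmax th \<bullet> rhat th act R = R"
    unfolding inner_vec_def by (simp add: pg)
  show ?thesis
    unfolding lbsgb_step_def Let_def by (simp add: pg ip u2_def vec_eq_iff)
qed

lemma u1_norm: fixes th :: "real^'n::finite" shows
  "norm (\<chi> a. (if act = a then R else 0) - softmax th $ a * R) \<le> sqrt 2 * \<bar>R\<bar>"
proof (rule power2_le_imp_le)
  let ?p = "\<lambda>a. softmax th $ a"
  have "norm (\<chi> a. (if act = a then R else 0) - ?p a * R) ^ 2
      = (\<Sum>a\<in>UNIV. R^2 * ((if act = a then 1 else 0) - ?p a)^2)"
    unfolding norm_sq_sum by (intro sum.cong refl) (simp add: power2_eq_square algebra_simps)
  also have "\<dots> \<le> (\<Sum>a\<in>UNIV. R^2 * ((if act = a then 1 else 0) + ?p a))"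
  proof (rule sum_mono, rule mult_left_mono)
    fix a
    have "0 \<le> ?p a" "?p a \<le> 1" using sm_pos[of th a] sm_le1[of th a] by auto
    moreover have "?p a * ?p a \<le> ?p a" using calculation by (simp add: mult_left_le)
    ultimately show "((if act = a then 1 else 0) - ?p a)^2 \<le> (if act = a then 1 else 0) + ?p a"
      by (auto simp: power2_eq_square algebra_simps)
  qed simp
  also have "\<dots> = R^2 * ((\<Sum>a\<in>UNIV. (if act = a then 1 else 0)) + (\<Sum>a\<in>UNIV. ?p a))"
    by (simp only: sum.distrib flip: sum_distrib_left)
  also have "\<dots> = (sqrt 2 * \<bar>R\<bar>)^2" by (simp add: sm_sum power_mult_distrib)
  finally show "norm (\<chi> a. (if act = a then R else 0) - ?p a * R) ^ 2 \<le> (sqrt 2 * \<bar>R\<bar>)^2" .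
qed simp

lemma step_norm: fixes th :: "real^'n::finite"
  assumes "\<alpha> > 0" "\<eta> > 0" "\<bar>R\<bar> \<le> Rmax"
  shows "norm (lbsgb_step \<alpha> \<eta> th act R - th) \<le> \<alpha> * (sqrt 2 * Rmax + real CARD('n) / \<eta>)"
proof -
  let ?u1 = "(\<chi> a. (if act = a then R else 0) - softmax th $ a * R) :: real^'n"
  have "norm (?u1 + (1/\<eta>) *\<^sub>R u2 th) \<le> norm ?u1 + norm ((1/\<eta>) *\<^sub>R u2 th)" by (rule norm_triangle_ineq)
  also have "\<dots> \<le> sqrt 2 * Rmax + real CARD('n) / \<eta>"
  proof (rule add_mono)
    show "norm ?u1 \<le> sqrt 2 * Rmax" using u1_norm[of act R th] assms(3)
      by (meson mult_left_mono order_trans real_sqrt_ge_zero zero_le_numeral)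
    have "norm ((1/\<eta>) *\<^sub>R u2 th) = (1/\<eta>) * norm (u2 th)" using assms(2) by simp
    also have "\<dots> \<le> (1/\<eta>) * real CARD('n)" using u2_norm[of th] assms(2) by (intro mult_left_mono) auto
    finally show "norm ((1/\<eta>) *\<^sub>R u2 th) \<le> real CARD('n) / \<eta>" by simp
  qed
  finally have "\<alpha> * norm (?u1 + (1/\<eta>) *\<^sub>R u2 th) \<le> \<alpha> * (sqrt 2 * Rmax + real CARD('n) / \<eta>)"
    using assms(1) by (intro mult_left_mono) auto
  then show ?thesis unfolding step_eq using assms(1) by simp
qed



theorem lemmaC2:
  fixes r :: "real^'n::finite" and Rmax \<eta> \<alpha> :: real
    and acts :: "nat \<Rightarrow> 'n" and rews :: "nat \<Rightarrow> real" and n :: nat and g :: "real^'n"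
  defines "K \<equiv> real CARD('n)"
  assumes eta: "\<eta> > 0"
    and rews_bd: "\<And>t. \<bar>rews t\<bar> \<le> Rmax"
    and r_bd: "\<And>a. \<bar>r $ a\<bar> \<le> Rmax"
    and alpha_pos: "\<alpha> > 0"
    and alpha_lt: "\<alpha> < 1 / (6 * (sqrt 2 * Rmax + (2/\<eta>) * K))"
    and grad: "(Phi \<eta> r has_derivative (\<lambda>h. g \<bullet> h)) (at (lbsgb \<alpha> \<eta> acts rews n))"
  shows "\<bar>Phi \<eta> r (lbsgb \<alpha> \<eta> acts rews (Suc n)) - Phi \<eta> r (lbsgb \<alpha> \<eta> acts rews n)
            - g \<bullet> (lbsgb \<alpha> \<eta> acts rews (Suc n) - lbsgb \<alpha> \<eta> acts rews n)\<bar>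
         \<le> (3 * norm g / (2 - 6 * \<alpha> * (sqrt 2 * Rmax + (2/\<eta>) * K)) + 15 * K / \<eta>)
            * (norm (lbsgb \<alpha> \<eta> acts rews (Suc n) - lbsgb \<alpha> \<eta> acts rews n))^2"
proof -
  define th where "th = lbsgb \<alpha> \<eta> acts rews n"
  define th' where "th' = lbsgb \<alpha> \<eta> acts rews (Suc n)"
  define d where "d = th' - th"
  define c where "c = sqrt 2 * Rmax + (2/\<eta>) * K"
  define Dn where "Dn = norm d"
  have K1: "K \<ge> 1" unfolding K_def by simp
  have R0: "Rmax \<ge> 0" using rews_bd[of 0] by linarith
  have cpos: "c > 0" unfolding c_def using K1 R0 eta by (simp add: add_nonneg_pos)
  have ac: "\<alpha> * c < 1/6"
    using alpha_lt cpos unfolding c_def[symmetric] by (simp add: field_simps)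
  have Dn_le: "Dn \<le> \<alpha> * (sqrt 2 * Rmax + K / \<eta>)"
    unfolding Dn_def d_def th'_def th_def K_def
    using step_norm[OF alpha_pos eta rews_bd[of n]] by simp
  have "\<alpha> * (sqrt 2 * Rmax + K / \<eta>) \<le> \<alpha> * c"
    unfolding c_def using alpha_pos eta K1 by (intro mult_left_mono) (auto simp: divide_simps)
  with Dn_le have Dc: "Dn \<le> \<alpha> * c" by linarith
  have D0: "Dn \<ge> 0" by (simp add: Dn_def)
  define q where "q = 1 - 3 * (\<alpha> * c)"
  have q: "q > 1/2" "q \<le> 1" unfolding q_def using ac alpha_pos cpos by auto
  have qD: "1 - 3 * Dn \<ge> q" unfolding q_def using Dc by linarith
  define diff where "diff m = (if m = 0 then (\<lambda>s. Phi \<eta> r (th + s *\<^sub>R d))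
       else if m = 1 then D1 \<eta> r th d else D2 \<eta> r th d)" for m :: nat
  have "\<exists>t. 0 < t \<and> t < 1 \<and> Phi \<eta> r (th + 1 *\<^sub>R d) =
      (\<Sum>m<2. diff m 0 / fact m * 1 ^ m) + diff 2 t / fact 2 * 1 ^ 2"
  proof (rule Maclaurin[of 1 2 diff "\<lambda>s. Phi \<eta> r (th + s *\<^sub>R d)"])
    show "diff 0 = (\<lambda>s. Phi \<eta> r (th + s *\<^sub>R d))" by (simp add: diff_def)
    show "\<forall>m t. m < 2 \<and> 0 \<le> t \<and> t \<le> 1 \<longrightarrow> DERIV (diff m) t :> diff (Suc m) t"
    proof (intro allI impI)
      fix m :: nat and t :: real assume "m < 2 \<and> 0 \<le> t \<and> t \<le> 1"
      then have "m = 0 \<or> m = 1" by auto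
      then show "DERIV (diff m) t :> diff (Suc m) t"
        by (auto simp: diff_def phi_deriv D1_deriv)
    qed
  qed auto
  then obtain t where t: "0 < t" "t < 1"
    and tay: "Phi \<eta> r th' = Phi \<eta> r th + D1 \<eta> r th d 0 + D2 \<eta> r th d t / 2"
    by (auto simp: diff_def d_def numeral_2_eq_2 lessThan_Suc)
  have gd: "D1 \<eta> r th d 0 = g \<bullet> d" using grad_eq(2)[OF grad[folded th_def]] .
  have gw: "g = VV r th 0 0 + (1/\<eta>) *\<^sub>R u2 th" using grad_eq(1)[OF grad[folded th_def]] .
  have v0: "norm (VV r th 0 0) \<le> norm g + K / \<eta>"
  proof -
    have e: "VV r th 0 0 = g - (1/\<eta>) *\<^sub>R u2 th" using gw by simp
    have "norm (VV r th 0 0) \<le> norm g + norm ((1/\<eta>) *\<^sub>R u2 th)"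
      unfolding e by (rule norm_triangle_ineq4)
    also have "norm ((1/\<eta>) *\<^sub>R u2 th) \<le> K / \<eta>"
      using u2_norm[of th] eta unfolding K_def by (simp add: divide_right_mono)
    finally show ?thesis by simp
  qed
  have Vt: "norm (VV r th d t) \<le> (norm g + K / \<eta>) / q"
  proof -
    have "norm (VV r th d t) \<le> norm (VV r th d 0) / (1 - 3 * Dn)"
      unfolding Dn_def
    proof (rule VV_growth)
      show "0 \<le> t" "t \<le> 1" using t by auto
      show "3 * norm d < 1" using qD q unfolding Dn_def by linarith
    qed
    also have "\<dots> \<le> (norm g + K / \<eta>) / q"
      unfolding VV0[of r th d]
    proof (rule frac_le)
      show "0 \<le> norm g + K / \<eta>" using K1 eta by simp
      show "norm (VV r th 0 0) \<le> norm g + K / \<eta>" by (rule v0)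
      show "0 < q" "q \<le> 1 - 3 * Dn" using q qD by auto
    qed
    finally show ?thesis .
  qed
  have rem: "\<bar>Phi \<eta> r th' - Phi \<eta> r th - g \<bullet> d\<bar> = \<bar>D2 \<eta> r th d t\<bar> / 2"
    using tay gd by simp
  have b2: "\<bar>D2 \<eta> r th d t\<bar> \<le> 3 * norm (VV r th d t) * Dn ^ 2 + K / \<eta> * Dn ^ 2"
    using D2_bound[OF eta, of r th d t] unfolding K_def Dn_def .
  have b3: "3 * norm (VV r th d t) * Dn ^ 2 \<le> 3 * ((norm g + K / \<eta>) / q) * Dn ^ 2"
    using Vt by (intro mult_right_mono mult_left_mono) auto
  have coef: "(3 * ((norm g + K / \<eta>) / q) + K / \<eta>) / 2 \<le> 3 * norm g / (2 - 6 * \<alpha> * c) + 15 * K / \<eta>"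
  proof -
    have e: "2 - 6 * \<alpha> * c = 2 * q" unfolding q_def by simp
    have kq: "K / \<eta> / q \<le> 2 * (K / \<eta>)"
      using q K1 eta by (simp add: divide_simps) 
    have "(3 * ((norm g + K / \<eta>) / q) + K / \<eta>) / 2 = 3 * norm g / (2 * q) + (3/2) * (K / \<eta> / q) + (K / \<eta>) / 2"
      using q by (simp add: field_simps)
    also have "\<dots> \<le> 3 * norm g / (2 * q) + 3 * (K / \<eta>) + (K / \<eta>) / 2" using kq by simp
    also have "\<dots> \<le> 3 * norm g / (2 * q) + 15 * K / \<eta>" using K1 eta by (simp add: divide_simps)
    finally show ?thesis unfolding e .
  qed
  have "\<bar>Phi \<eta> r th' - Phi \<eta> r th - g \<bullet> d\<bar> \<le> (3 * ((norm g + K / \<eta>) / q) + K / \<eta>) / 2 * Dn ^ 2"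
  proof -
    have alg: "\<And>X Y Z::real. (3 * X + Y) / 2 * Z = (3 * X * Z + Y * Z) / 2" by (simp add: field_simps)
    have "(3 * ((norm g + K / \<eta>) / q) + K / \<eta>) / 2 * Dn ^ 2
        = (3 * ((norm g + K / \<eta>) / q) * Dn ^ 2 + K / \<eta> * Dn ^ 2) / 2"
      by (rule alg)
    moreover have "\<bar>D2 \<eta> r th d t\<bar> \<le> 3 * ((norm g + K / \<eta>) / q) * Dn ^ 2 + K / \<eta> * Dn ^ 2"
      using b2 b3 by linarith
    then have "\<bar>D2 \<eta> r th d t\<bar> / 2 \<le> (3 * ((norm g + K / \<eta>) / q) * Dn ^ 2 + K / \<eta> * Dn ^ 2) / 2"
      by (rule divide_right_mono) simp
    ultimately show ?thesis unfolding rem by simp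
  qed
  also have "\<dots> \<le> (3 * norm g / (2 - 6 * \<alpha> * c) + 15 * K / \<eta>) * Dn ^ 2"
    using coef by (intro mult_right_mono) auto
  finally show ?thesis unfolding th_def[symmetric] th'_def[symmetric] d_def[symmetric] c_def[symmetric] Dn_def
    by (simp add: mult.assoc)
qed

end
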